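(* Let $\mathbb{F}$ be a field of characteristic $p$ ($p=0$ or prime) and let $f\in\mathbb{F}[X]$ have degree at least $2$. Suppose $f$ is not a monomial and is not a binomial of the form $aX^{p^{\ell}}+b$ with $a\in\mathbb{F}\setminus\{0\}$, $b\in\mathbb{F}$, $\ell\ge1$ (the latter exclusion only relevant when $p>0$). Then $f^{(k)}$ is not a monomial for any $k\ge1$.
   Context: Iterates: $f^{(0)}=X$, $f^{(k)}=f\circ f^{(k-1)}$. A monomial means a polynomial of the form $cX^m$ with $c\in\mathbb{F}$. *)

theory Defs
  imports "HOL-Computational_Algebra.Polynomial"
begin

definition poly_iter :: "'a::comm_semiring_1 poly \<Rightarrow> nat \<Rightarrow> 'a poly" where
  "poly_iter f k = ((\<lambda>g. pcompose f g) ^^ k) [:0, 1:]"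

definition is_monomial :: "'a::zero poly \<Rightarrow> bool" where
  "is_monomial g \<longleftrightarrow> (\<exists>c m. g = monom c m)"

end

theory Submission imports Defs "HOL-Computational_Algebra.Primes" "HOL-Computational_Algebra.Euclidean_Algorithm"
begin

lemma pcompose_pow: "pcompose (p ^ n) q = (pcompose p q) ^ n"
  for p q :: "'a::comm_semiring_1 poly"
  by (induction n) (simp_all add: pcompose_mult pcompose_1)

lemma pcompose_X: "pcompose [:0, 1:] q = q"
  for q :: "'a::comm_semiring_1 poly"
  by (simp add: pcompose_pCons)

lemma pcompose_monom: "pcompose (monom c n) q = smult c (q ^ n)"
  for q :: "'a::comm_semiring_1 poly"
  by (simp add: monom_altdef pcompose_smult pcompose_pow pcompose_X)

lemma X_pow_monom: "([:0, 1:] :: 'a::comm_semiring_1 poly) ^ n = monom 1 n"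
  by (simp add: monom_altdef)

lemma lemA:
  fixes h g :: "'a::field poly"
  assumes dh: "degree h \<ge> 1" and dg: "degree g \<ge> 1" and hg: "pcompose h g = monom c m"
  shows "\<exists>\<beta> b j. g = monom \<beta> j + [:b:]"
proof -
  define b where "b = coeff g 0"
  define G where "G = g - [:b:]"
  define H where "H = pcompose h [:b, 1:]"
  have gG: "g = pcompose [:b, 1:] G" by (simp add: pcompose_pCons G_def)
  have HG: "pcompose H G = monom c m"
    using hg gG by (simp add: H_def pcompose_assoc)
  have degH: "degree H = degree h" by (simp add: H_def degree_pcompose)
  have degG: "degree G = degree g"
  proof -
    have "G = g + [:-b:]" by (simp add: G_def)
    moreover have "degree [:-b:] < degree g" using dg by simp
    ultimately show ?thesis by (simp add: degree_add_eq_left)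
  qed
  have G0: "poly G 0 = 0" by (simp add: G_def b_def poly_0_coeff_0)
  have "H \<noteq> 0" using degH dh by auto
  from order_decomp[OF this, of 0] obtain K where
    HK: "H = [:0, 1:] ^ order 0 H * K" and K0': "\<not> [:0, 1:] dvd K" by auto
  define e where "e = order 0 H"
  have K0: "poly K 0 \<noteq> 0" using K0' poly_eq_0_iff_dvd[of K 0] by simp
  have "G \<noteq> 0" using degG dg by auto
  from order_decomp[OF this, of 0] obtain u where
    Gu: "G = [:0, 1:] ^ order 0 G * u" and u0': "\<not> [:0, 1:] dvd u" by auto
  define j where "j = order 0 G"
  have u0: "poly u 0 \<noteq> 0" using u0' poly_eq_0_iff_dvd[of u 0] by simp
  have "j \<noteq> 0"
  proof
    assume "j = 0"
    then have "G = u" using Gu j_def by simp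
    then show False using G0 u0 by simp
  qed
  define w where "w = u ^ e * pcompose K G"
  have w0: "poly w 0 \<noteq> 0"
    using u0 K0 G0 by (simp add: w_def poly_pcompose)
  have "pcompose H G = G ^ e * pcompose K G"
    by (subst HK) (simp add: e_def pcompose_mult pcompose_pow pcompose_X)
  also have "\<dots> = monom 1 (j * e) * w"
    by (subst Gu) (simp add: w_def j_def power_mult_distrib X_pow_monom[symmetric] power_mult mult.assoc)
  finally have eq: "monom 1 (j * e) * w = monom c m" using HG by simp
  have "coeff (monom 1 (j * e) * w) (j * e) = poly w 0"
    by (simp add: coeff_monom_mult poly_0_coeff_0)
  then have "coeff (monom c m) (j * e) \<noteq> 0" using eq w0 by simp
  then have jem: "j * e = m" by (simp add: coeff_monom split: if_splits)
  have "monom c m = monom 1 m * [:c:]" by (simp add: smult_monom)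
  then have "monom 1 m * w = monom 1 m * [:c:]" using eq jem by simp
  then have wc: "w = [:c:]" by (metis mult_left_cancel monom_eq_0_iff one_neq_zero)
  have u_ne: "u \<noteq> 0" using u0 by auto
  have KG_ne: "pcompose K G \<noteq> 0" using K0 G0
    by (metis poly_0 poly_pcompose)
  have "degree w = e * degree u + degree K * degree G"
    unfolding w_def using u_ne KG_ne
    by (simp add: degree_mult_eq degree_power_eq degree_pcompose)
  then have dw: "e * degree u + degree K * degree G = 0" using wc by simp
  then have "degree K = 0" using degG dg by simp
  moreover have "degree H = e + degree K"
  proof -
    have "K \<noteq> 0" using K0 by auto
    then have "degree ([:0, 1:] ^ e * K) = e + degree K"
      by (simp add: degree_mult_eq degree_power_eq)
    then show ?thesis using HK by (simp add: e_def)
  qed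
  ultimately have "e \<ge> 1" using degH dh by simp
  then have "degree u = 0" using dw by simp
  then obtain u0 where "u = [:u0:]" by (metis degree_eq_zeroE)
  then have "G = monom u0 j" using Gu by (simp add: j_def X_pow_monom smult_monom)
  then have "g = monom u0 j + [:b:]" by (simp add: G_def algebra_simps)
  then show ?thesis by blast
qed

lemma binom_poly_iff:
  fixes d :: nat
  assumes d1: "d \<ge> 1"
  shows "(([:1, 1:] :: 'a::field poly) ^ d = monom 1 d + 1) \<longleftrightarrow>
     (\<forall>i. 0 < i \<and> i < d \<longrightarrow> of_nat (d choose i) = (0::'a))"
proof
  assume eq: "([:1, 1:] :: 'a poly) ^ d = monom 1 d + 1"
  show "\<forall>i. 0 < i \<and> i < d \<longrightarrow> of_nat (d choose i) = (0::'a)"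
  proof (intro allI impI)
    fix i assume i: "0 < i \<and> i < d"
    have "coeff (([:1, 1:] :: 'a poly) ^ d) i = of_nat (d choose i)"
      using i by (simp add: coeff_linear_poly_power)
    also have "coeff (([:1, 1:] :: 'a poly) ^ d) i = coeff (monom 1 d + 1 :: 'a poly) i" using eq by simp
    finally show "of_nat (d choose i) = (0::'a)" using i by (simp add: coeff_monom coeff_1)
  qed
next
  assume h: "\<forall>i. 0 < i \<and> i < d \<longrightarrow> of_nat (d choose i) = (0::'a)"
  show "([:1, 1:] :: 'a poly) ^ d = monom 1 d + 1"
  proof (rule poly_eqI)
    fix i
    show "coeff (([:1, 1:] :: 'a poly) ^ d) i = coeff (monom 1 d + 1) i"
    proof (cases "i \<le> d")
      case True
      then show ?thesis using h
        using d1 by (cases "i = 0"; cases "i = d") (auto simp: coeff_linear_poly_power coeff_monom coeff_1)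
    next
      case False
      then have "degree (([:1, 1:] :: 'a poly) ^ d) < i"
        by (metis degree_linear_power not_le)
      then show ?thesis using False by (simp add: coeff_eq_0 coeff_monom coeff_1)
    qed
  qed
qed

lemma lemL:
  fixes d :: nat
  assumes "d \<ge> 2" and "\<forall>i. 0 < i \<and> i < d \<longrightarrow> of_nat (d choose i) = (0::'a::field)"
  shows "CHAR('a) > 0 \<and> (\<exists>l\<ge>1. d = CHAR('a) ^ l)"
  using assms
proof (induction d rule: less_induct)
  case (less d)
  define p where "p = CHAR('a)"
  have "of_nat (d choose 1) = (0::'a)" using less.prems by auto
  then have pd: "p dvd d" by (simp add: of_nat_eq_0_iff_char_dvd p_def)
  have ppos: "p > 0" using pd less.prems(1) by (metis dvd_0_left_iff gr0I not_numeral_le_zero)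
  then have pp: "prime p" unfolding p_def by (rule prime_CHAR_semidom)
  obtain e where de: "d = p * e" using pd by auto
  have e1: "e \<ge> 1" using de less.prems(1) by (cases e) auto
  show ?case
  proof (cases "e = 1")
    case True
    then show ?thesis using de ppos p_def by (intro conjI exI[of _ 1]) auto
  next
    case False
    then have e2: "e \<ge> 2" using e1 by simp
    have p2: "p \<ge> 2" using pp prime_ge_2_nat by blast
    have ed: "e < d" using de p2 e1 by simp
    have Xd: "([:1, 1:] :: 'a poly) ^ d = monom 1 d + 1"
      using less.prems binom_poly_iff by (metis Suc_1 Suc_leD)
    have "\<forall>i. 0 < i \<and> i < p \<longrightarrow> of_nat (p choose i) = (0::'a)"
      using dvd_choose_prime pp p_def by (auto simp: of_nat_eq_0_iff_char_dvd)
    then have Xp: "([:1, 1:] :: 'a poly) ^ p = monom 1 p + 1"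
      using binom_poly_iff p2 by (metis Suc_1 Suc_leD)
    have "pcompose (([:1, 1:] :: 'a poly) ^ e) (monom 1 p) = (pcompose [:1,1:] (monom 1 p)) ^ e"
      by (simp add: pcompose_pow)
    also have "pcompose [:1,1:] (monom 1 p) = (monom 1 p + 1 :: 'a poly)"
      by (simp add: pcompose_pCons one_pCons)
    also have "\<dots> ^ e = ([:1, 1:] :: 'a poly) ^ d" using Xp de by (simp add: power_mult)
    also have "\<dots> = monom 1 d + 1" by (rule Xd)
    also have "\<dots> = pcompose (monom 1 e + 1) (monom 1 p)"
      using de by (simp add: pcompose_add pcompose_monom monom_power mult.commute pcompose_1)
    finally have "pcompose (([:1, 1:] :: 'a poly) ^ e - (monom 1 e + 1)) (monom 1 p) = 0"
      by (simp add: pcompose_diff)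
    then have "([:1, 1:] :: 'a poly) ^ e = monom 1 e + 1"
      using pcompose_eq_0[of _ "monom 1 p :: 'a poly"] p2 by (simp add: degree_monom_eq del: pcompose_eq_0_iff) (metis right_minus_eq)
    then have "\<forall>i. 0 < i \<and> i < e \<longrightarrow> of_nat (e choose i) = (0::'a)"
      using binom_poly_iff e1 by blast
    from less.IH[OF ed e2 this] obtain l where "l \<ge> 1" "e = p ^ l" unfolding p_def by blast
    then show ?thesis using de ppos p_def by (intro conjI exI[of _ "Suc l"]) auto
  qed
qed

lemma lemC:
  fixes \<beta> \<alpha> b r c :: "'a::field"
  assumes \<beta>: "\<beta> \<noteq> 0" and \<alpha>: "\<alpha> \<noteq> 0" and s: "s \<ge> 1" and d: "d \<ge> 2" and b: "b \<noteq> 0"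
    and eq: "pcompose (monom \<beta> d + [:b:]) (monom \<alpha> s + [:r:]) = monom c m"
  shows "CHAR('a) > 0 \<and> (\<exists>l\<ge>1. d = CHAR('a) ^ l)"
proof -
  have dg1: "degree (monom \<beta> d + [:b:]) = d"
    using \<beta> d by (simp add: degree_add_eq_left degree_monom_eq)
  have dg2: "degree (monom \<alpha> s + [:r:]) = s"
    using \<alpha> s by (simp add: degree_add_eq_left degree_monom_eq)
  have "degree (monom c m) = d * s" using eq dg1 dg2 by (metis degree_pcompose)
  moreover have "d * s > 0" using d s by simp
  ultimately have c: "c \<noteq> 0" by (cases "c = 0") auto
  then have m: "m = s * d" using \<open>degree (monom c m) = d * s\<close> by (simp add: degree_monom_eq)
  have g: "monom \<alpha> s + [:r:] = pcompose [:r, \<alpha>:] (monom 1 s)"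
    by (simp add: pcompose_pCons smult_monom)
  define Q where "Q = smult \<beta> ([:r, \<alpha>:] ^ d) + [:b:]"
  have Qc: "pcompose (monom \<beta> d + [:b:]) [:r, \<alpha>:] = Q"
    by (simp add: Q_def pcompose_add pcompose_monom)
  have "pcompose Q (monom 1 s) = monom c m"
    using eq unfolding g pcompose_assoc Qc .
  also have "monom c m = pcompose (monom c d) (monom 1 s)"
    by (simp add: pcompose_monom monom_power m smult_monom)
  finally have "pcompose (Q - monom c d) (monom 1 s) = 0" by (simp add: pcompose_diff)
  then have "Q - monom c d = 0"
    using pcompose_eq_0[of "Q - monom c d" "monom 1 s :: 'a poly"] s by (simp add: degree_monom_eq)
  then have QE: "Q = monom c d" by simp
  have "coeff Q 0 = \<beta> * r ^ d + b" by (simp add: Q_def coeff_linear_poly_power)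
  moreover have "coeff (monom c d) 0 = 0" using d by (simp add: coeff_monom)
  ultimately have "\<beta> * r ^ d + b = 0" using QE by simp
  then have r: "r \<noteq> 0" using b d by (auto simp: power_0_left)
  have "\<forall>i. 0 < i \<and> i < d \<longrightarrow> of_nat (d choose i) = (0::'a)"
  proof (intro allI impI)
    fix i assume i: "0 < i \<and> i < d"
    have "coeff Q i = \<beta> * (of_nat (d choose i) * \<alpha> ^ i * r ^ (d - i))"
      using i by (simp add: Q_def coeff_linear_poly_power coeff_pCons split: nat.split)
    moreover have "coeff (monom c d) i = 0" using i by (simp add: coeff_monom)
    ultimately show "of_nat (d choose i) = (0::'a)" using QE \<alpha> \<beta> r by simp
  qed
  then show ?thesis using lemL d by blast
qed

lemma iter_Suc: "poly_iter f (Suc k) = pcompose f (poly_iter f k)"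
  by (simp add: poly_iter_def)

lemma iter_Suc': "poly_iter f (Suc k) = pcompose (poly_iter f k) f"
  for f :: "'a::comm_semiring_1 poly"
proof (induction k)
  case 0
  then show ?case by (simp add: poly_iter_def pcompose_X)
next
  case (Suc k)
  then show ?case by (metis iter_Suc pcompose_assoc)
qed

lemma iter_degree: "degree (poly_iter f k) = degree f ^ k"
  for f :: "'a::field poly"
  by (induction k) (simp_all add: iter_Suc degree_pcompose poly_iter_def)

theorem lemma10:
  fixes f :: "'a::field poly"
  assumes "degree f \<ge> 2"
    and "\<not> is_monomial f"
    and "\<not> (\<exists>a b l. CHAR('a) > 0 \<and> a \<noteq> 0 \<and> l \<ge> 1 \<and>
                 f = monom a (CHAR('a) ^ l) + [:b:])"
  shows "\<forall>k\<ge>1. \<not> is_monomial (poly_iter f k)"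
proof (intro allI impI notI)
  fix k :: nat assume k: "k \<ge> 1" and mono: "is_monomial (poly_iter f k)"
  define d where "d = degree f"
  have d2: "d \<ge> 2" using assms(1) d_def by simp
  obtain c m where F: "poly_iter f k = monom c m" using mono unfolding is_monomial_def by blast
  show False
  proof (cases "k = 1")
    case True
    then have "poly_iter f k = f" by (simp add: poly_iter_def pcompose_X)
    then show False using mono assms(2) by simp
  next
    case False
    then obtain j where kj: "k = Suc j" and j: "j \<ge> 1" using k by (cases k) auto
    define P where "P = poly_iter f j"
    have dP: "degree P = d ^ j" by (simp add: P_def iter_degree d_def)
    have dP1: "degree P \<ge> 1" using dP d2 by simp
    have dPj: "d ^ j \<ge> 1" using d2 by simp
    have e1: "pcompose P f = monom c m" using F kj iter_Suc' P_def by metis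
    have e2: "pcompose f P = monom c m" using F kj iter_Suc P_def by metis
    obtain \<beta> b i where fi: "f = monom \<beta> i + [:b:]"
      using lemA[OF dP1 _ e1] d2 d_def by auto
    obtain \<alpha> r s where Ps: "P = monom \<alpha> s + [:r:]"
      using lemA[OF _ dP1 e2] d2 d_def by auto
    have "\<beta> \<noteq> 0 \<and> i = d"
    proof (cases "\<beta> = 0 \<or> i = 0")
      case True
      then have "degree f = 0" using fi by (auto simp: monom_0)
      then show ?thesis using d2 d_def by simp
    next
      case False
      then show ?thesis using fi d_def by (simp add: degree_add_eq_left degree_monom_eq)
    qed
    then have \<beta>: "\<beta> \<noteq> 0" and fd: "f = monom \<beta> d + [:b:]" using fi by auto
    have "\<alpha> \<noteq> 0 \<and> s = d ^ j"
    proof (cases "\<alpha> = 0 \<or> s = 0")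
      case True
      then have "degree P = 0" using Ps by (auto simp: monom_0)
      then show ?thesis using dPj dP by linarith
    next
      case False
      then show ?thesis using Ps dP by (simp add: degree_add_eq_left degree_monom_eq)
    qed
    then have \<alpha>: "\<alpha> \<noteq> 0" and s: "s \<ge> 1" using dPj by auto
    have b: "b \<noteq> 0"
    proof
      assume "b = 0"
      then have "f = monom \<beta> d" using fd by simp
      then show False using assms(2) unfolding is_monomial_def by blast
    qed
    have "CHAR('a) > 0 \<and> (\<exists>l\<ge>1. d = CHAR('a) ^ l)"
      using lemC[OF \<beta> \<alpha> s d2 b] e2 fd Ps by simp
    then show False using assms(3) fd \<beta> by blast
  qed
qed

end
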